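(* Let $\kappa$ be an uncountable cardinal with $\kappa=\kappa^{<\kappa}$. Then there is a continuous injective function $f:{}^\kappa\kappa\to{}^\kappa\kappa$ whose range is not a $\kappa$-Borel subset of ${}^\kappa\kappa$.
   Context: ${}^\kappa\kappa$ is the set of functions $\kappa\to\kappa$, with the topology whose basic open sets are $N_s=\{x\in{}^\kappa\kappa : s\subseteq x\}$ for $s$ a function from some ordinal $\alpha<\kappa$ to $\kappa$. A subset of ${}^\kappa\kappa$ is $\kappa$-Borel if it belongs to the smallest algebra of subsets of ${}^\kappa\kappa$ that contains all open sets and is closed under unions of $\kappa$ many sets (and complements). *)

theory Defs
  imports Main "HOL-Library.Countable_Set"
begin

(* The cardinal kappa is represented by a type 'k carrying a cardinal order r
   (card_order r: a well-order on UNIV that is minimal among well-orders of UNIV).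
   Ordinals alpha < kappa are identified with elements alpha of 'k, the ordinal alpha
   being the initial segment underS r alpha. ^kappa kappa is the type 'k => 'k. *)

(* basic open set N_s for s : alpha -> kappa (s given by its values on underS r alpha) *)
definition basic_nbhd :: "'k rel \<Rightarrow> 'k \<Rightarrow> ('k \<Rightarrow> 'k) \<Rightarrow> ('k \<Rightarrow> 'k) set" where
  "basic_nbhd r \<alpha> s = {x. \<forall>\<beta>\<in>underS r \<alpha>. x \<beta> = s \<beta>}"

definition kk_open :: "'k rel \<Rightarrow> ('k \<Rightarrow> 'k) set \<Rightarrow> bool" where
  "kk_open r U \<longleftrightarrow> (\<forall>x\<in>U. \<exists>\<alpha> s. x \<in> basic_nbhd r \<alpha> s \<and> basic_nbhd r \<alpha> s \<subseteq> U)"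

definition kk_continuous :: "'k rel \<Rightarrow> (('k \<Rightarrow> 'k) \<Rightarrow> ('k \<Rightarrow> 'k)) \<Rightarrow> bool" where
  "kk_continuous r f \<longleftrightarrow> (\<forall>U. kk_open r U \<longrightarrow> kk_open r (f -` U))"

inductive_set kappa_borel :: "'k rel \<Rightarrow> ('k \<Rightarrow> 'k) set set" for r :: "'k rel" where
  kb_open: "kk_open r U \<Longrightarrow> U \<in> kappa_borel r"
| kb_compl: "U \<in> kappa_borel r \<Longrightarrow> - U \<in> kappa_borel r"
| kb_union: "(\<forall>U\<in>F. U \<in> kappa_borel r) \<Longrightarrow> ordLeq3 (card_of F) r \<Longrightarrow> \<Union>F \<in> kappa_borel r"

end

theory Submission
  imports Defs
begin


locale kk =
  fixes r :: "'k rel" and enc :: "('k \<Rightarrow> 'k) \<Rightarrow> 'k" and z0 z1 w :: 'k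
  assumes co: "card_order r"
  and unc: "\<not> countable (UNIV :: 'k set)"
  and encb: "bij_betw enc (\<Union>\<alpha>. Func (underS r \<alpha>) (UNIV::'k set)) UNIV"
  and z01: "z0 \<noteq> z1" and wu: "w \<noteq> undefined"
begin

lemma wo: "well_order_on UNIV r" using co card_order_on_well_order_on by blast
lemma refl[simp]: "(a,a) \<in> r" using wo unfolding well_order_on_def linear_order_on_def partial_order_on_def preorder_on_def refl_on_def by blast
lemma trans: "(a,b) \<in> r \<Longrightarrow> (b,c) \<in> r \<Longrightarrow> (a,c) \<in> r" using wo unfolding well_order_on_def linear_order_on_def partial_order_on_def preorder_on_def trans_def by blast
lemma antisym: "(a,b) \<in> r \<Longrightarrow> (b,a) \<in> r \<Longrightarrow> a = b" using wo unfolding well_order_on_def linear_order_on_def partial_order_on_def antisym_def by blast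
lemma total: "(a,b) \<in> r \<or> (b,a) \<in> r" using wo unfolding well_order_on_def linear_order_on_def total_on_def by (cases "a = b") auto
lemma wf: "wf (r - Id)" using wo unfolding well_order_on_def by blast

lemma uS[simp]: "a \<in> underS r b \<longleftrightarrow> a \<noteq> b \<and> (a,b) \<in> r" unfolding underS_def by auto

lemma not_le: "(a,b) \<notin> r \<longleftrightarrow> b \<in> underS r a" by (simp only: uS) (metis total refl antisym)
lemma less_le_trans: "a \<in> underS r b \<Longrightarrow> (b,c) \<in> r \<Longrightarrow> a \<in> underS r c"
  by (simp only: uS) (metis trans antisym)
lemma le_less_trans: "(a,b) \<in> r \<Longrightarrow> b \<in> underS r c \<Longrightarrow> a \<in> underS r c"
  by (simp only: uS) (metis trans antisym)
lemma less_trans: "a \<in> underS r b \<Longrightarrow> b \<in> underS r c \<Longrightarrow> a \<in> underS r c"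
  by (simp only: uS) (metis trans antisym)
lemma less_asym: "a \<in> underS r b \<Longrightarrow> b \<in> underS r a \<Longrightarrow> False" using antisym by force

lemma ex_min: assumes "A \<noteq> {}" shows "\<exists>a\<in>A. \<forall>b\<in>A. (a,b) \<in> r"
proof -
  obtain a where a: "a \<in> A" "\<And>y. (y,a) \<in> r - Id \<Longrightarrow> y \<notin> A" using wfE_min[OF wf] assms by blast
  show ?thesis using a total by (intro bexI[of _ a]) auto
qed

definition mn :: "'k set \<Rightarrow> 'k" where "mn A = (SOME a. a \<in> A \<and> (\<forall>b\<in>A. (a,b) \<in> r))"
lemma mn: assumes "A \<noteq> {}" shows "mn A \<in> A" "\<And>b. b \<in> A \<Longrightarrow> (mn A, b) \<in> r"
  using someI_ex[of "\<lambda>a. a \<in> A \<and> (\<forall>b\<in>A. (a,b)\<in>r)"] ex_min[OF assms] unfolding mn_def by auto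

lemma mn_eq: "a \<in> A \<Longrightarrow> (\<And>b. b \<in> A \<Longrightarrow> (a,b) \<in> r) \<Longrightarrow> mn A = a"
  using mn[of A] antisym by blast

definition bt :: 'k where "bt = mn UNIV"
lemma bt_le[simp]: "(bt, a) \<in> r" unfolding bt_def using mn[of UNIV] by auto
lemma not_less_bt[simp]: "a \<notin> underS r bt" using bt_le antisym by auto

lemma rU: "ordIso2 r (card_of (UNIV :: 'k set))" using card_of_unique co by blast
lemma Cr: "Card_order r" using co card_order_on_Card_order by blast
lemma Fr: "Field r = UNIV" using co card_order_on_Card_order by blast

definition small :: "'b set \<Rightarrow> bool" where "small X \<longleftrightarrow> ordLess2 (card_of X) r"

lemma Wr: "Well_order r" using Cr by (simp add: card_order_on_def)

lemma small_underS: "small (underS r a)"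
  unfolding small_def using card_of_underS[OF Cr, of a] Fr by simp

lemma small_subset: "small X \<Longrightarrow> Y \<subseteq> X \<Longrightarrow> small Y"
  unfolding small_def by (metis card_of_mono1 ordLeq_ordLess_trans)

lemma small_image: "small X \<Longrightarrow> small (f ` X)"
  unfolding small_def by (metis card_of_image ordLeq_ordLess_trans)

lemma small_not_UNIV: fixes X :: "'k set"  assumes "small X" shows "\<exists>a. a \<notin> X"
proof (rule ccontr)
  assume "\<not> ?thesis" hence "X = UNIV" by auto
  hence "ordLess2 (card_of (UNIV::'k set)) (card_of (UNIV::'k set))"
    using assms rU unfolding small_def by (metis ordLess_ordIso_trans)
  thus False using ordLess_irreflexive by metis
qed

lemma inf: "infinite (UNIV :: 'k set)" using unc countable_finite by blast

lemma small_Un: "small X \<Longrightarrow> small Y \<Longrightarrow> small (X \<union> Y)"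
  unfolding small_def using card_of_Un_ordLess_infinite_Field[OF _ Cr] Fr inf by metis

lemma countable_small: assumes "countable X" shows "small X"
proof (rule ccontr)
  assume "\<not> small X"
  hence "ordLeq3 r (card_of X)" unfolding small_def
    using not_ordLess_iff_ordLeq[OF Wr card_of_Well_order] by blast
  hence "ordLeq3 (card_of (UNIV::'k set)) (card_of X)"
    using rU ordIso_symmetric ordIso_ordLeq_trans by metis
  then obtain g where "inj_on g (UNIV::'k set)" "g ` UNIV \<subseteq> X" using card_of_ordLeq[of UNIV X] by auto
  hence "countable (UNIV::'k set)" using assms countable_subset countable_image_inj_on by metis
  thus False using unc by blast
qed

lemma small_insert: "small X \<Longrightarrow> small (insert a X)"
  using small_Un[of "{a}" X] countable_small by auto

lemma no_max: "\<exists>b. a \<in> underS r b"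
proof -
  have "small (insert a (underS r a))" by (rule small_insert[OF small_underS])
  then obtain b where "b \<notin> insert a (underS r a)" using small_not_UNIV by meson
  thus ?thesis using total[of a b] by auto
qed

definition suc :: "'k \<Rightarrow> 'k" where "suc a = mn {b. a \<in> underS r b}"
lemma suc_gt: "a \<in> underS r (suc a)" unfolding suc_def using mn[of "{b. a \<in> underS r b}"] no_max by auto
lemma suc_least: "a \<in> underS r b \<Longrightarrow> (suc a, b) \<in> r" unfolding suc_def using mn(2)[of "{b. a \<in> underS r b}"] by auto
lemma less_suc_iff: "b \<in> underS r (suc a) \<longleftrightarrow> (b,a) \<in> r"
proof
  assume b: "b \<in> underS r (suc a)"
  show "(b,a) \<in> r"
  proof (rule ccontr)
    assume "(b,a) \<notin> r"
    hence "a \<in> underS r b" using not_le by blast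
    hence "(suc a, b) \<in> r" by (rule suc_least)
    thus False using b antisym by auto
  qed
next
  assume "(b,a) \<in> r" thus "b \<in> underS r (suc a)" using suc_gt le_less_trans by blast
qed


abbreviation W :: "('k \<Rightarrow> 'k) set" where "W \<equiv> (\<Union>\<alpha>. Func (underS r \<alpha>) (UNIV::'k set))"

lemma enc_inj: "s \<in> W \<Longrightarrow> t \<in> W \<Longrightarrow> enc s = enc t \<Longrightarrow> s = t"
  using encb unfolding bij_betw_def inj_on_def by blast

lemma small_le: "small {x. (x,b) \<in> r}"
proof -
  have "{x. (x,b) \<in> r} = underS r (suc b)" using less_suc_iff by auto
  thus ?thesis using small_underS by simp
qed

lemma regular: assumes "small X" shows "\<exists>b. \<forall>x\<in>X. (x,b) \<in> r"
proof (rule ccontr)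
  assume nb: "\<not> ?thesis"
  have "ordLess2 (card_of X) r" using assms unfolding small_def .
  moreover have "Well_order r" by (rule Wr)
  ultimately obtain a where "ordIso2 (card_of X) (Restr r (underS r a))"
    using ordLess_iff_ordIso_Restr[of r "card_of X"] card_of_Well_order by blast
  then obtain g where "iso (card_of X) (Restr r (underS r a)) g" unfolding ordIso_def by blast
  hence "bij_betw g X (Field (Restr r (underS r a)))" unfolding iso_def Field_card_of by blast
  moreover have "Field (Restr r (underS r a)) = underS r a"
    using Refl_Field_Restr[of r] Fr wo unfolding well_order_on_def linear_order_on_def partial_order_on_def preorder_on_def by simp
  ultimately have bg: "bij_betw g X (underS r a)" by simp
  define h where "h = inv_into X g"
  have hb: "bij_betw h (underS r a) X" using bg bij_betw_inv_into h_def by blast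
  define B where "B i = (\<lambda>t. t i) ` {t \<in> Func (underS r a) UNIV. (enc t, h i) \<in> r}" for i
  have smB: "small (B i)" for i
  proof -
    let ?T = "{t \<in> Func (underS r a) UNIV. (enc t, h i) \<in> r}"
    have TW: "?T \<subseteq> W" by (rule subsetI, rule UN_I[of a]) auto
    have inj: "inj_on enc ?T"
    proof (rule inj_onI)
      fix s t assume "s \<in> ?T" "t \<in> ?T" "enc s = enc t"
      thus "s = t" using TW by (intro enc_inj) auto
    qed
    have img: "enc ` ?T \<subseteq> {x. (x, h i) \<in> r}" by auto
    have "ordLeq3 (card_of ?T) (card_of {x. (x, h i) \<in> r})"
      by (rule card_of_ordLeq[THEN iffD1], rule exI[of _ enc], simp only: inj img)
    hence "small ?T"
      unfolding small_def by (rule ordLeq_ordLess_trans[OF _ small_le[unfolded small_def]])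
    thus ?thesis unfolding B_def by (rule small_image)
  qed
  have "\<forall>i. \<exists>v. v \<notin> B i" using small_not_UNIV[OF smB] by blast
  then obtain c where c: "\<And>i. c i \<notin> B i" by metis
  define phi where "phi i = (if i \<in> underS r a then c i else undefined)" for i
  have phiB: "phi i \<notin> B i" if "i \<in> underS r a" for i
    using that c[of i] unfolding phi_def by auto
  have phiF: "phi \<in> Func (underS r a) UNIV" unfolding Func_def phi_def by auto
  obtain x where x: "x \<in> X" "(x, enc phi) \<notin> r" using nb by blast
  then obtain i where i: "i \<in> underS r a" "h i = x" using hb unfolding bij_betw_def by auto
  have "(enc phi, h i) \<in> r" using x i total by blast
  hence "phi i \<in> B i" unfolding B_def using phiF by blast
  thus False using phiB i by blast
qed

end



context kk begin

definition sup :: "'k set \<Rightarrow> 'k" where "sup A = mn {b. \<forall>a\<in>A. (a,b) \<in> r}"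

lemma sup_ub: assumes "small A" "a \<in> A" shows "(a, sup A) \<in> r"
proof -
  obtain b where "\<forall>a\<in>A. (a,b) \<in> r" using regular[OF assms(1)] by blast
  hence "{b. \<forall>a\<in>A. (a,b) \<in> r} \<noteq> {}" by blast
  hence "mn {b. \<forall>a\<in>A. (a,b) \<in> r} \<in> {b. \<forall>a\<in>A. (a,b) \<in> r}" by (rule mn(1))
  thus ?thesis unfolding sup_def using assms(2) by simp
qed

lemma sup_least: assumes "\<forall>a\<in>A. (a,b) \<in> r" shows "(sup A, b) \<in> r"
  unfolding sup_def using mn(2)[of "{b. \<forall>a\<in>A. (a,b) \<in> r}" b] assms by auto

lemma less_sup: assumes "b \<in> underS r (sup A)" shows "\<exists>a\<in>A. b \<in> underS r a"
proof (rule ccontr)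
  assume "\<not> ?thesis"
  hence "\<forall>a\<in>A. (a,b) \<in> r" using not_le by metis
  hence "(sup A, b) \<in> r" by (rule sup_least)
  thus False using assms antisym by auto
qed

lemma sup_empty: "sup {} = bt"
  unfolding sup_def bt_def by simp

definition dec :: "'k \<Rightarrow> ('k \<Rightarrow> 'k)" where "dec c = inv_into W enc c"

lemma dec_W: "dec c \<in> W"
  unfolding dec_def using encb by (metis bij_betw_def inv_into_into UNIV_I)

lemma dec_enc: "t \<in> W \<Longrightarrow> dec (enc t) = t"
  unfolding dec_def using encb by (metis bij_betw_def inv_into_f_f)

definition ed :: "'k \<Rightarrow> 'k" where "ed c = (SOME \<alpha>. dec c \<in> Func (underS r \<alpha>) UNIV)"

lemma ed: "dec c \<in> Func (underS r (ed c)) UNIV"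
  unfolding ed_def using dec_W[of c] by (metis (mono_tags, lifting) UN_E someI_ex)

definition mx :: "'k \<Rightarrow> 'k \<Rightarrow> 'k" where "mx a b = (if (a,b) \<in> r then b else a)"
lemma mx1: "(a, mx a b) \<in> r" unfolding mx_def by simp
lemma mx2: "(b, mx a b) \<in> r" unfolding mx_def using total[of a b] by auto

definition cs :: "'k \<Rightarrow> 'k \<Rightarrow> 'k" where "cs j p = (if j = bt then p else suc (suc p))"
definition nx :: "'k \<Rightarrow> 'k \<Rightarrow> 'k \<Rightarrow> 'k" where "nx c j p = mx (ed c) (suc (cs j p))"

lemma cs_ge: "(p, cs j p) \<in> r"
proof -
  have "p \<in> underS r (suc (suc p))" by (rule less_trans[OF suc_gt suc_gt])
  thus ?thesis unfolding cs_def by simp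
qed

lemma nx_gt: "p \<in> underS r (nx c j p)"
  unfolding nx_def by (rule less_le_trans[OF le_less_trans[OF cs_ge suc_gt] mx2])

definition q :: "('k \<Rightarrow> 'k) \<Rightarrow> 'k \<Rightarrow> 'k" where
  "q y = wfrec (r - Id) (\<lambda>qq j. sup ((\<lambda>i. nx (y i) i (qq i)) ` underS r j))"

lemma q_eq: "q y j = sup ((\<lambda>i. nx (y i) i (q y i)) ` underS r j)"
proof -
  have "q y j = sup ((\<lambda>i. nx (y i) i (cut (q y) (r - Id) j i)) ` underS r j)"
    unfolding q_def by (subst wfrec[OF wf]) simp
  also have "(\<lambda>i. nx (y i) i (cut (q y) (r - Id) j i)) ` underS r j = (\<lambda>i. nx (y i) i (q y i)) ` underS r j"
    by (rule image_cong) (auto simp: cut_def)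
  finally show ?thesis .
qed

definition nxt :: "('k \<Rightarrow> 'k) \<Rightarrow> 'k \<Rightarrow> 'k" where "nxt y j = nx (y j) j (q y j)"

lemma small_nxt: "small ((\<lambda>i. nx (y i) i (q y i)) ` underS r j)"
  by (rule small_image[OF small_underS])

lemma nxt_le_q: "i \<in> underS r j \<Longrightarrow> (nxt y i, q y j) \<in> r"
  unfolding nxt_def by (subst q_eq[of y j]) (rule sup_ub[OF small_nxt], blast)

lemma q_nxt: "q y j \<in> underS r (nxt y j)"
  unfolding nxt_def by (rule nx_gt)

lemma q_mono: "i \<in> underS r j \<Longrightarrow> q y i \<in> underS r (q y j)"
  using q_nxt nxt_le_q less_le_trans by blast

lemma q_mono_le: "(i,j) \<in> r \<Longrightarrow> (q y i, q y j) \<in> r"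
  using q_mono[of i j y] by (cases "i = j") auto

lemma q_ge: "(j, q y j) \<in> r"
proof (induction j rule: wf_induct[OF wf])
  case (1 j)
  show ?case
  proof (rule ccontr)
    assume "(j, q y j) \<notin> r"
    hence a: "q y j \<in> underS r j" using not_le by blast
    hence "(q y j, q y (q y j)) \<in> r" using 1 by auto
    moreover have "q y (q y j) \<in> underS r (q y j)" using q_mono[OF a] by blast
    ultimately show False using antisym by auto
  qed
qed

lemma q_bt: "q y bt = bt"
proof -
  have "underS r bt = {}" using not_less_bt by blast
  thus ?thesis by (subst q_eq) (simp add: sup_empty)
qed

lemma nxt_ed: "(ed (y j), nxt y j) \<in> r" unfolding nxt_def nx_def by (rule mx1)
lemma nxt_cs: "cs j (q y j) \<in> underS r (nxt y j)" unfolding nxt_def nx_def using suc_gt mx2 less_le_trans by blast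

end



context kk begin

definition blk :: "('k \<Rightarrow> 'k) \<Rightarrow> 'k \<Rightarrow> 'k" where "blk y b = mn {j. b \<in> underS r (nxt y j)}"
definition rst :: "('k \<Rightarrow> 'k) \<Rightarrow> 'k \<Rightarrow> ('k \<Rightarrow> 'k)" where
  "rst y j = (\<lambda>i. if i \<in> underS r j then y i else undefined)"
definition f :: "('k \<Rightarrow> 'k) \<Rightarrow> ('k \<Rightarrow> 'k)" where
  "f y b = (let j = blk y b in if j \<noteq> bt \<and> b = q y j then z0
     else if j \<noteq> bt \<and> b = suc (q y j) then enc (rst y j) else dec (y j) b)"

lemma blk_ne: "{j. b \<in> underS r (nxt y j)} \<noteq> {}"
proof -
  have "b \<in> underS r (nxt y b)" by (rule le_less_trans[OF q_ge q_nxt])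
  thus ?thesis by blast
qed

lemma blk_in: "b \<in> underS r (nxt y (blk y b))"
  using mn(1)[OF blk_ne[of b y]] unfolding blk_def by simp

lemma blk_min: "b \<in> underS r (nxt y j) \<Longrightarrow> (blk y b, j) \<in> r"
  using mn(2)[OF blk_ne[of b y]] unfolding blk_def by simp

lemma blk_q: "(q y (blk y b), b) \<in> r"
proof -
  have "\<forall>a\<in>(\<lambda>i. nx (y i) i (q y i)) ` underS r (blk y b). (a, b) \<in> r"
  proof
    fix a assume "a \<in> (\<lambda>i. nx (y i) i (q y i)) ` underS r (blk y b)"
    then obtain i where i: "i \<in> underS r (blk y b)" "a = nxt y i" unfolding nxt_def by blast
    show "(a, b) \<in> r"
    proof (rule ccontr)
      assume "(a,b) \<notin> r"
      hence "b \<in> underS r (nxt y i)" using i not_le by metis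
      hence "(blk y b, i) \<in> r" by (rule blk_min)
      thus False using i(1) antisym by auto
    qed
  qed
  hence "(sup ((\<lambda>i. nx (y i) i (q y i)) ` underS r (blk y b)), b) \<in> r" by (rule sup_least)
  thus ?thesis by (subst q_eq)
qed

lemma blk_char: assumes "(q y j, b) \<in> r" "b \<in> underS r (nxt y j)" shows "blk y b = j"
  unfolding blk_def
proof (rule mn_eq)
  show "j \<in> {j. b \<in> underS r (nxt y j)}" using assms(2) by simp
  fix j' assume j': "j' \<in> {j. b \<in> underS r (nxt y j)}"
  show "(j, j') \<in> r"
  proof (rule ccontr)
    assume "(j,j') \<notin> r"
    hence "j' \<in> underS r j" using not_le by metis
    hence "(nxt y j', q y j) \<in> r" by (rule nxt_le_q)
    hence "(nxt y j', b) \<in> r" using assms(1) trans by blast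
    thus False using j' antisym by auto
  qed
qed

lemma f_mark: assumes "j \<noteq> bt" shows "f y (q y j) = z0"
proof -
  have "blk y (q y j) = j" by (rule blk_char[OF refl q_nxt])
  thus ?thesis unfolding f_def using assms by simp
qed

lemma suc_neq: "suc a \<noteq> a" using suc_gt[of a] by auto

lemma f_code: assumes "j \<noteq> bt" shows "f y (suc (q y j)) = enc (rst y j)"
proof -
  have "suc (suc (q y j)) \<in> underS r (nxt y j)" using nxt_cs[of j y] assms unfolding cs_def by simp
  hence "suc (q y j) \<in> underS r (nxt y j)" by (rule less_trans[OF suc_gt])
  moreover have "(q y j, suc (q y j)) \<in> r" using suc_gt by simp
  ultimately have "blk y (suc (q y j)) = j" by (rule blk_char[rotated])
  thus ?thesis unfolding f_def using assms suc_neq[of "q y j"] by simp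
qed

lemma f_cont: assumes "(cs j (q y j), b) \<in> r" "b \<in> underS r (nxt y j)" shows "f y b = dec (y j) b"
proof -
  have "(q y j, b) \<in> r" using cs_ge assms(1) trans by blast
  hence bj: "blk y b = j" using assms(2) by (rule blk_char)
  show ?thesis
  proof (cases "j = bt")
    case True thus ?thesis unfolding f_def using bj by simp
  next
    case False
    have a: "(suc (suc (q y j)), b) \<in> r" using assms(1) False unfolding cs_def by simp
    have "q y j \<in> underS r b" by (rule less_le_trans[OF less_trans[OF suc_gt suc_gt] a])
    moreover have "suc (q y j) \<in> underS r b" by (rule less_le_trans[OF suc_gt a])
    ultimately show ?thesis unfolding f_def using bj by auto
  qed
qed

lemma dep_q: assumes "\<forall>i\<in>underS r j. y' i = y i" shows "(i, j) \<in> r \<Longrightarrow> q y' i = q y i"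
proof (induction i rule: wf_induct[OF wf])
  case (1 i)
  have "(\<lambda>k. nx (y' k) k (q y' k)) ` underS r i = (\<lambda>k. nx (y k) k (q y k)) ` underS r i"
  proof (rule image_cong[OF HOL.refl])
    fix k assume k: "k \<in> underS r i"
    hence kj: "k \<in> underS r j" using less_le_trans 1(2) by blast
    have "q y' k = q y k" using 1(1) k kj by auto
    thus "nx (y' k) k (q y' k) = nx (y k) k (q y k)" using assms kj by simp
  qed
  thus ?case by (subst (1 2) q_eq) simp
qed

lemma dep_f: assumes "\<forall>i\<in>underS r j. y' i = y i" "b \<in> underS r (q y j)" shows "f y' b = f y b"
proof -
  let ?k = "blk y b"
  have "b \<in> underS r (sup ((\<lambda>i. nx (y i) i (q y i)) ` underS r j))"
    using assms(2) by (subst (asm) q_eq)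
  then obtain a where a: "a \<in> (\<lambda>i. nx (y i) i (q y i)) ` underS r j" "b \<in> underS r a"
    using less_sup by blast
  then obtain i where i: "i \<in> underS r j" "b \<in> underS r (nxt y i)"
    unfolding nxt_def by blast
  have kj: "?k \<in> underS r j" by (rule le_less_trans[OF blk_min[OF i(2)] i(1)])
  have qk: "q y' ?k = q y ?k" using dep_q[OF assms(1)] kj by simp
  have yk: "y' ?k = y ?k" by (rule assms(1)[rule_format, OF kj])
  have nk: "nxt y' ?k = nxt y ?k" unfolding nxt_def using qk yk by simp
  have "(q y' ?k, b) \<in> r" using blk_q[of y b] qk by simp
  moreover have "b \<in> underS r (nxt y' ?k)" using blk_in[of b y] nk by simp
  ultimately have bk: "blk y' b = ?k" by (rule blk_char)
  have rk: "rst y' ?k = rst y ?k"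
  proof (rule ext)
    fix i show "rst y' ?k i = rst y ?k i"
    proof (cases "i \<in> underS r ?k")
      case True
      hence "i \<in> underS r j" by (rule less_trans[OF _ kj])
      hence "y' i = y i" by (rule assms(1)[rule_format])
      thus ?thesis unfolding rst_def using True by simp
    next
      case False thus ?thesis unfolding rst_def by (simp del: uS)
    qed
  qed
  show ?thesis unfolding f_def Let_def bk qk yk rk ..
qed

end



context kk begin

lemma f_kk_cont: "kk_continuous r f"
  unfolding kk_continuous_def kk_open_def
proof (intro allI impI ballI)
  fix U y assume U: "\<forall>x\<in>U. \<exists>\<alpha> s. x \<in> basic_nbhd r \<alpha> s \<and> basic_nbhd r \<alpha> s \<subseteq> U" and y: "y \<in> f -` U"
  then obtain \<alpha> s where as: "f y \<in> basic_nbhd r \<alpha> s" "basic_nbhd r \<alpha> s \<subseteq> U" by blast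
  have "basic_nbhd r \<alpha> y \<subseteq> f -` U"
  proof
    fix y' assume "y' \<in> basic_nbhd r \<alpha> y"
    hence ag: "\<forall>i\<in>underS r \<alpha>. y' i = y i" unfolding basic_nbhd_def by blast
    have "\<forall>b\<in>underS r \<alpha>. f y' b = s b"
    proof
      fix b assume b: "b \<in> underS r \<alpha>"
      have "b \<in> underS r (q y \<alpha>)" by (rule less_le_trans[OF b q_ge])
      hence "f y' b = f y b" by (rule dep_f[OF ag])
      thus "f y' b = s b" using as(1) b unfolding basic_nbhd_def by simp
    qed
    hence "f y' \<in> basic_nbhd r \<alpha> s" unfolding basic_nbhd_def by blast
    thus "y' \<in> f -` U" using as(2) by blast
  qed
  moreover have "y \<in> basic_nbhd r \<alpha> y" unfolding basic_nbhd_def by blast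
  ultimately show "\<exists>\<alpha> s. y \<in> basic_nbhd r \<alpha> s \<and> basic_nbhd r \<alpha> s \<subseteq> f -` U" by blast
qed

lemma small_range_nat: "small (range (s :: nat \<Rightarrow> 'k))"
  by (rule countable_small) simp

lemma q_lim: assumes inc: "\<And>n. s n \<in> underS r (s (Suc n))"
  shows "q y (sup (range s)) = sup (range (\<lambda>n. q y (s n)))"
proof (rule antisym)
  let ?L = "sup (range s)"
  have sL: "s n \<in> underS r ?L" for n
    by (rule less_le_trans[OF inc sup_ub[OF small_range_nat]]) simp
  have "\<forall>a\<in>(\<lambda>i. nx (y i) i (q y i)) ` underS r ?L. (a, sup (range (\<lambda>n. q y (s n)))) \<in> r"
  proof
    fix a assume "a \<in> (\<lambda>i. nx (y i) i (q y i)) ` underS r ?L"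
    then obtain i where i: "i \<in> underS r ?L" "a = nxt y i" unfolding nxt_def by blast
    obtain m where "m \<in> range s" "i \<in> underS r m" using less_sup[OF i(1)] by blast
    then obtain n where n: "i \<in> underS r (s n)" by blast
    have "(a, q y (s n)) \<in> r" using nxt_le_q[OF n] i(2) by simp
    moreover have "(q y (s n), sup (range (\<lambda>n. q y (s n)))) \<in> r"
      by (rule sup_ub[OF small_range_nat]) simp
    ultimately show "(a, sup (range (\<lambda>n. q y (s n)))) \<in> r" by (rule trans)
  qed
  hence "(sup ((\<lambda>i. nx (y i) i (q y i)) ` underS r ?L), sup (range (\<lambda>n. q y (s n)))) \<in> r"
    by (rule sup_least)
  thus "(q y ?L, sup (range (\<lambda>n. q y (s n)))) \<in> r" by (subst q_eq)
  have "\<forall>a\<in>range (\<lambda>n. q y (s n)). (a, q y ?L) \<in> r"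
  proof
    fix a assume "a \<in> range (\<lambda>n. q y (s n))"
    then obtain n where "a = q y (s n)" by blast
    thus "(a, q y ?L) \<in> r" using q_mono[OF sL[of n]] by simp
  qed
  thus "(sup (range (\<lambda>n. q y (s n))), q y ?L) \<in> r" by (rule sup_least)
qed

lemma club: "\<exists>J J'. J \<noteq> bt \<and> J' \<noteq> bt \<and> q y J = q y' J' \<and> b \<in> underS r (q y J)"
proof -
  define jn where "jn = rec_nat (suc b) (\<lambda>_ x. suc (q y' (q y x)))"
  have j0: "jn 0 = suc b" unfolding jn_def by simp
  have jS: "jn (Suc n) = suc (q y' (q y (jn n)))" for n unfolding jn_def by simp
  define jn' where "jn' n = q y (jn n)" for n
  have incj: "jn n \<in> underS r (jn (Suc n))" for n
  proof -
    have "(jn n, q y' (q y (jn n))) \<in> r" by (rule trans[OF q_ge q_ge])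
    thus ?thesis unfolding jS by (rule le_less_trans[OF _ suc_gt])
  qed
  have incj': "jn' n \<in> underS r (jn' (Suc n))" for n
    unfolding jn'_def by (rule q_mono[OF incj])
  define J where "J = sup (range jn)"
  define J' where "J' = sup (range jn')"
  have qJ: "q y J = sup (range (\<lambda>n. q y (jn n)))" unfolding J_def by (rule q_lim[where s=jn, OF incj])
  have qJ': "q y' J' = sup (range (\<lambda>n. q y' (jn' n)))" unfolding J'_def by (rule q_lim[where s=jn', OF incj'])
  have e: "sup (range (\<lambda>n. q y (jn n))) = sup (range (\<lambda>n. q y' (jn' n)))"
  proof (rule antisym)
    show "(sup (range (\<lambda>n. q y (jn n))), sup (range (\<lambda>n. q y' (jn' n)))) \<in> r"
    proof (rule sup_least, rule ballI)
      fix a assume "a \<in> range (\<lambda>n. q y (jn n))"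
      then obtain n where a: "a = q y (jn n)" by blast
      have "(a, q y' (jn' n)) \<in> r" unfolding a jn'_def by (rule q_ge)
      moreover have "(q y' (jn' n), sup (range (\<lambda>n. q y' (jn' n)))) \<in> r"
        by (rule sup_ub[OF small_range_nat]) simp
      ultimately show "(a, sup (range (\<lambda>n. q y' (jn' n)))) \<in> r" by (rule trans)
    qed
    show "(sup (range (\<lambda>n. q y' (jn' n))), sup (range (\<lambda>n. q y (jn n)))) \<in> r"
    proof (rule sup_least, rule ballI)
      fix a assume "a \<in> range (\<lambda>n. q y' (jn' n))"
      then obtain n where a: "a = q y' (jn' n)" by blast
      have "a \<in> underS r (jn (Suc n))" unfolding a jn'_def jS by (rule suc_gt)
      hence "a \<in> underS r (q y (jn (Suc n)))" by (rule less_le_trans[OF _ q_ge])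
      hence "(a, q y (jn (Suc n))) \<in> r" by simp
      moreover have "(q y (jn (Suc n)), sup (range (\<lambda>n. q y (jn n)))) \<in> r"
        by (rule sup_ub[OF small_range_nat]) simp
      ultimately show "(a, sup (range (\<lambda>n. q y (jn n)))) \<in> r" by (rule trans)
    qed
  qed
  have jJ: "(jn n, J) \<in> r" for n unfolding J_def by (rule sup_ub[OF small_range_nat]) simp
  have jJ': "(jn' n, J') \<in> r" for n unfolding J'_def by (rule sup_ub[OF small_range_nat]) simp
  have "jn 0 \<in> underS r J" by (rule less_le_trans[OF incj jJ])
  hence Jbt: "J \<noteq> bt" using not_less_bt[of "jn 0"] by (auto simp del: uS)
  have "jn' 0 \<in> underS r J'" by (rule less_le_trans[OF incj' jJ'])
  hence Jbt': "J' \<noteq> bt" using not_less_bt[of "jn' 0"] by (auto simp del: uS)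
  have "b \<in> underS r (jn 0)" unfolding j0 by (rule suc_gt)
  hence bJ: "b \<in> underS r (q y J)" by (rule less_le_trans[OF _ trans[OF jJ[of 0] q_ge]])
  have "q y J = q y' J'" using qJ qJ' e by simp
  thus ?thesis using Jbt Jbt' bJ by blast
qed

lemma rst_W: "rst y j \<in> W"
  by (rule UN_I[of j]) (auto simp: rst_def Func_def simp del: uS)

lemma f_inj: assumes "f y = f y'" shows "y = y'"
proof (rule ext)
  fix i
  obtain J J' where J: "J \<noteq> bt" "J' \<noteq> bt" "q y J = q y' J'" "mx (q y i) (q y' i) \<in> underS r (q y J)"
    using club[of y y' "mx (q y i) (q y' i)"] by blast
  have "q y i \<in> underS r (q y J)" by (rule le_less_trans[OF mx1 J(4)])
  hence iJ: "i \<in> underS r J"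
  proof -
    assume h: "q y i \<in> underS r (q y J)"
    show ?thesis
    proof (rule ccontr)
      assume "i \<notin> underS r J"
      hence "(J, i) \<in> r" using not_le[of J i] by blast
      hence "(q y J, q y i) \<in> r" by (rule q_mono_le)
      hence "q y J \<in> underS r (q y J)" by (rule le_less_trans[OF _ h])
      thus False by simp
    qed
  qed
  have "q y' i \<in> underS r (q y' J')" using le_less_trans[OF mx2 J(4)] J(3) by simp
  hence iJ': "i \<in> underS r J'"
  proof -
    assume h: "q y' i \<in> underS r (q y' J')"
    show ?thesis
    proof (rule ccontr)
      assume "i \<notin> underS r J'"
      hence "(J', i) \<in> r" using not_le[of J' i] by blast
      hence "(q y' J', q y' i) \<in> r" by (rule q_mono_le)
      hence "q y' J' \<in> underS r (q y' J')" by (rule le_less_trans[OF _ h])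
      thus False by simp
    qed
  qed
  have c1: "f y (suc (q y J)) = enc (rst y J)" by (rule f_code[OF J(1)])
  have c2: "f y' (suc (q y' J')) = enc (rst y' J')" by (rule f_code[OF J(2)])
  have "enc (rst y J) = enc (rst y' J')" using c1 c2 J(3) assms by metis
  hence "rst y J = rst y' J'" by (rule enc_inj[OF rst_W rst_W])
  hence "rst y J i = rst y' J' i" by simp
  thus "y i = y' i" using iJ iJ' unfolding rst_def by (simp del: uS)
qed

definition sw :: "'k \<Rightarrow> ('k \<Rightarrow> 'k) \<Rightarrow> ('k \<Rightarrow> 'k)" where
  "sw a x = (\<lambda>b. if b \<in> underS r a then x b else if x b = z0 then z1 else if x b = z1 then z0 else x b)"

lemma sw_f: assumes "f y' = sw a (f y)" shows False
proof -
  obtain J J' where J: "J \<noteq> bt" "J' \<noteq> bt" "q y J = q y' J'" "a \<in> underS r (q y J)"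
    using club by blast
  have n: "q y J \<notin> underS r a" using J(4) less_asym by blast
  have "f y' (q y J) = z0" using f_mark[OF J(2), of y'] J(3) by simp
  moreover have "f y (q y J) = z0" by (rule f_mark[OF J(1)])
  moreover have "f y' (q y J) = sw a (f y) (q y J)" using assms by simp
  ultimately have "z0 = z1" using n unfolding sw_def by (simp del: uS)
  thus False using z01 by blast
qed

end



context kk begin

definition kdense :: "('k \<Rightarrow> 'k) set \<Rightarrow> bool" where
  "kdense D \<longleftrightarrow> (\<forall>\<alpha> s. D \<inter> basic_nbhd r \<alpha> s \<noteq> {})"

lemma dens_ext: assumes "kk_open r D" "kdense D"
  shows "\<exists>\<delta> p'. (\<gamma>, \<delta>) \<in> r \<and> (\<forall>b\<in>underS r \<gamma>. p' b = p b) \<and> basic_nbhd r \<delta> p' \<subseteq> D"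
proof -
  obtain x where x: "x \<in> D" "x \<in> basic_nbhd r \<gamma> p" using assms(2) unfolding kdense_def by blast
  then obtain \<alpha> s where as: "x \<in> basic_nbhd r \<alpha> s" "basic_nbhd r \<alpha> s \<subseteq> D"
    using assms(1) unfolding kk_open_def by blast
  have "basic_nbhd r (mx \<alpha> \<gamma>) x \<subseteq> basic_nbhd r \<alpha> s"
  proof
    fix z assume z: "z \<in> basic_nbhd r (mx \<alpha> \<gamma>) x"
    have "\<forall>b\<in>underS r \<alpha>. z b = s b"
    proof
      fix b assume b: "b \<in> underS r \<alpha>"
      have "b \<in> underS r (mx \<alpha> \<gamma>)" by (rule less_le_trans[OF b mx1])
      hence "z b = x b" using z unfolding basic_nbhd_def by blast
      thus "z b = s b" using as(1) b unfolding basic_nbhd_def by simp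
    qed
    thus "z \<in> basic_nbhd r \<alpha> s" unfolding basic_nbhd_def by blast
  qed
  moreover have "\<forall>b\<in>underS r \<gamma>. x b = p b" using x(2) unfolding basic_nbhd_def by blast
  ultimately show ?thesis using as(2) mx2 by blast
qed

lemma construct:
  fixes D :: "'k \<Rightarrow> ('k \<Rightarrow> 'k) set"
  assumes D: "\<And>j. kk_open r (D j) \<and> kdense (D j)"
  shows "\<exists>y. f y \<in> basic_nbhd r \<alpha>0 s0 \<and> (\<forall>j. f y \<in> D j)"
proof -
  define pre where "pre yy j = (if j = bt then (\<alpha>0, s0) else (cs j (q yy j), f yy))" for yy j
  define P where "P yy j dp \<longleftrightarrow> (fst (pre yy j), fst dp) \<in> r \<and>
      (\<forall>b\<in>underS r (fst (pre yy j)). snd dp b = snd (pre yy j) b) \<and> basic_nbhd r (fst dp) (snd dp) \<subseteq> D j" for yy j dp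
  define ch where "ch yy j = (SOME dp. P yy j dp)" for yy j
  have chP: "P yy j (ch yy j)" for yy j
  proof -
    obtain \<delta> p' where "(fst (pre yy j), \<delta>) \<in> r \<and> (\<forall>b\<in>underS r (fst (pre yy j)). p' b = snd (pre yy j) b) \<and> basic_nbhd r \<delta> p' \<subseteq> D j"
      using dens_ext[OF conjunct1[OF D] conjunct2[OF D]] by blast
    hence "P yy j (\<delta>, p')" unfolding P_def by simp
    thus ?thesis unfolding ch_def by (rule someI)
  qed
  define tt where "tt yy j = (\<lambda>b. if b \<in> underS r (suc (fst (ch yy j))) then (if b = fst (ch yy j) then w else snd (ch yy j) b) else undefined)" for yy j
  define G where "G yy j = enc (tt yy j)" for yy j
  define y where "y = wfrec (r - Id) G"
  have ttW: "tt yy j \<in> Func (underS r (suc (fst (ch yy j)))) UNIV" for yy j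
    unfolding tt_def Func_def by (simp del: uS)
  have key: "f y \<in> D j \<and> (j = bt \<longrightarrow> f y \<in> basic_nbhd r \<alpha>0 s0)" for j
  proof -
    define yy where "yy = cut y (r - Id) j"
    have ag: "\<forall>i\<in>underS r j. yy i = y i" unfolding yy_def cut_def by auto
    have yj: "y j = enc (tt yy j)" unfolding y_def yy_def by (subst wfrec[OF wf]) (simp add: G_def)
    obtain \<gamma> p where gp: "pre yy j = (\<gamma>, p)" by fastforce
    obtain \<delta> p' where dp: "ch yy j = (\<delta>, p')" by fastforce
    have Pj: "(\<gamma>, \<delta>) \<in> r" "\<forall>b\<in>underS r \<gamma>. p' b = p b" "basic_nbhd r \<delta> p' \<subseteq> D j"
      using chP[of yy j] unfolding P_def gp dp by simp_all
    have tW: "tt yy j \<in> W" using ttW by blast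
    have dy: "dec (y j) = tt yy j" unfolding yj by (rule dec_enc[OF tW])
    have "tt yy j \<delta> = w" unfolding tt_def dp using suc_gt by simp
    hence "\<delta> \<in> underS r (ed (y j))" using ed[of "y j"] wu unfolding dy Func_def by fastforce
    hence "(suc \<delta>, ed (y j)) \<in> r" by (rule suc_least)
    hence dn: "\<delta> \<in> underS r (nxt y j)" using suc_gt less_le_trans trans[OF _ nxt_ed] by blast
    have qq: "q yy j = q y j" using dep_q[OF ag] by simp
    have agree: "\<forall>b\<in>underS r \<delta>. f y b = p' b"
    proof
      fix b assume b: "b \<in> underS r \<delta>"
      show "f y b = p' b"
      proof (cases "j \<noteq> bt \<and> b \<in> underS r \<gamma>")
        case True
        have g: "\<gamma> = suc (suc (q y j))" and pf: "p = f yy" using gp True qq unfolding pre_def cs_def by auto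
        have "f y b = f yy b"
        proof -
          have "(b, suc (q y j)) \<in> r" using True g less_suc_iff by blast
          hence "b = suc (q y j) \<or> b \<in> underS r (suc (q y j))" by auto
          moreover
          { assume "b = suc (q y j)"
            moreover have "rst yy j = rst y j" unfolding rst_def using ag by (auto simp del: uS)
            ultimately have ?thesis using f_code[of j y] f_code[of j yy] True qq by simp }
          moreover
          { assume "b \<in> underS r (suc (q y j))"
            hence "(b, q y j) \<in> r" using less_suc_iff by blast
            hence "b = q y j \<or> b \<in> underS r (q y j)" by auto
            moreover
            { assume "b = q y j"
              hence ?thesis using f_mark[of j y] f_mark[of j yy] True qq by simp }
            moreover
            { assume "b \<in> underS r (q y j)"
              hence ?thesis using dep_f[OF ag] by simp }
            ultimately have ?thesis by blast }
          ultimately show ?thesis by blast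
        qed
        also have "\<dots> = p' b" using Pj(2) True pf by simp
        finally show ?thesis .
      next
        case False
        have "(cs j (q y j), b) \<in> r"
        proof (cases "j = bt")
          case True thus ?thesis unfolding cs_def using q_bt by simp
        next
          case nb: False
          hence "\<gamma> = cs j (q y j)" using gp qq unfolding pre_def by simp
          thus ?thesis using False nb not_le by blast
        qed
        moreover have "b \<in> underS r (nxt y j)" by (rule less_trans[OF b dn])
        ultimately have "f y b = dec (y j) b" by (rule f_cont)
        also have "\<dots> = p' b" unfolding dy tt_def dp using b less_trans[OF b suc_gt] by auto
        finally show ?thesis .
      qed
    qed
    hence fD: "f y \<in> basic_nbhd r \<delta> p'" unfolding basic_nbhd_def by blast
    have "j = bt \<longrightarrow> f y \<in> basic_nbhd r \<alpha>0 s0"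
    proof
      assume jb: "j = bt"
      hence g: "\<gamma> = \<alpha>0" "p = s0" using gp unfolding pre_def by auto
      have "\<forall>b\<in>underS r \<alpha>0. f y b = s0 b"
      proof
        fix b assume b: "b \<in> underS r \<alpha>0"
        have "b \<in> underS r \<delta>" using less_le_trans[OF b] Pj(1) g by simp
        thus "f y b = s0 b" using agree Pj(2) b g by simp
      qed
      thus "f y \<in> basic_nbhd r \<alpha>0 s0" unfolding basic_nbhd_def by blast
    qed
    thus ?thesis using fD Pj(3) by blast
  qed
  show ?thesis using key[of bt] key by blast
qed

end



context kk begin

lemma leq_r: "ordLeq3 (card_of A) (card_of (UNIV::'k set)) \<Longrightarrow> ordLeq3 (card_of A) r"
  using rU ordIso_symmetric ordLeq_ordIso_trans by metis

lemma r_leq: "ordLeq3 (card_of A) r \<Longrightarrow> ordLeq3 (card_of A) (card_of (UNIV::'k set))"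
  using rU ordLeq_ordIso_trans by metis

lemma card_Un: "ordLeq3 (card_of A) r \<Longrightarrow> ordLeq3 (card_of B) r \<Longrightarrow> ordLeq3 (card_of (A \<union> B)) r"
  using card_of_Un_ordLeq_infinite_Field[OF _ _ _ Cr] Fr inf by metis

lemma card_single: "ordLeq3 (card_of {a}) r"
proof -
  have "ordLeq3 (card_of {a}) (card_of (UNIV::'k set))"
    by (rule card_of_ordLeq[THEN iffD1], rule exI[of _ "\<lambda>_. bt"]) simp
  thus ?thesis by (rule leq_r)
qed

definition good :: "('k \<Rightarrow> 'k) set \<Rightarrow> bool" where
  "good B \<longleftrightarrow> (\<exists>U F. kk_open r U \<and> ordLeq3 (card_of F) r \<and> (\<forall>D\<in>F. kk_open r D \<and> kdense D)
      \<and> (\<forall>x\<in>\<Inter>F. x \<in> B \<longleftrightarrow> x \<in> U))"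

lemma good_open: assumes "kk_open r U" shows "good U"
proof -
  have "ordLeq3 (card_of ({}::('k \<Rightarrow> 'k) set set)) r" by (rule leq_r[OF card_of_empty])
  thus ?thesis unfolding good_def using assms by (intro exI[of _ U] exI[of _ "{}"]) simp
qed

lemma in_nbhd: "s \<in> basic_nbhd r \<alpha> s" unfolding basic_nbhd_def by simp

lemma good_compl: assumes "good B" shows "good (- B)"
proof -
  obtain U F where UF: "kk_open r U" "ordLeq3 (card_of F) r" "\<forall>D\<in>F. kk_open r D \<and> kdense D"
    "\<forall>x\<in>\<Inter>F. x \<in> B \<longleftrightarrow> x \<in> U" using assms unfolding good_def by blast
  define V where "V = {x. \<exists>\<alpha> s. x \<in> basic_nbhd r \<alpha> s \<and> basic_nbhd r \<alpha> s \<inter> U = {}}"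
  have Vo: "kk_open r V" unfolding kk_open_def V_def by blast
  have UV: "U \<inter> V = {}" unfolding V_def by blast
  define E where "E = U \<union> V"
  have Eo: "kk_open r E" using UF(1) Vo unfolding kk_open_def E_def by blast
  have Ed: "kdense E" unfolding kdense_def
  proof (intro allI)
    fix \<alpha> s
    show "E \<inter> basic_nbhd r \<alpha> s \<noteq> {}"
    proof (cases "basic_nbhd r \<alpha> s \<inter> U = {}")
      case True
      hence "s \<in> V" unfolding V_def using in_nbhd by blast
      thus ?thesis using in_nbhd unfolding E_def by blast
    next
      case False thus ?thesis unfolding E_def by blast
    qed
  qed
  have c: "ordLeq3 (card_of (insert E F)) r" using card_Un[OF card_single UF(2)] by simp
  show ?thesis unfolding good_def
  proof (intro exI[of _ V] exI[of _ "insert E F"] conjI)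
    show "kk_open r V" by (rule Vo)
    show "ordLeq3 (card_of (insert E F)) r" by (rule c)
    show "\<forall>D\<in>insert E F. kk_open r D \<and> kdense D" using Eo Ed UF(3) by blast
    show "\<forall>x\<in>\<Inter>(insert E F). x \<in> - B \<longleftrightarrow> x \<in> V" using UF(4) UV unfolding E_def by blast
  qed
qed

lemma good_Union: assumes "\<forall>B\<in>BB. good B" "ordLeq3 (card_of BB) r" shows "good (\<Union>BB)"
proof -
  have "\<forall>B\<in>BB. \<exists>UF. kk_open r (fst UF) \<and> ordLeq3 (card_of (snd UF)) r \<and> (\<forall>D\<in>snd UF. kk_open r D \<and> kdense D)
      \<and> (\<forall>x\<in>\<Inter>(snd UF). x \<in> B \<longleftrightarrow> x \<in> fst UF)" using assms(1) unfolding good_def by auto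
  from bchoice[OF this] obtain g where g0: "\<forall>B\<in>BB. kk_open r (fst (g B)) \<and> ordLeq3 (card_of (snd (g B))) r \<and> (\<forall>D\<in>snd (g B). kk_open r D \<and> kdense D)
      \<and> (\<forall>x\<in>\<Inter>(snd (g B)). x \<in> B \<longleftrightarrow> x \<in> fst (g B))" ..
  have g: "kk_open r (fst (g B)) \<and> ordLeq3 (card_of (snd (g B))) r \<and> (\<forall>D\<in>snd (g B). kk_open r D \<and> kdense D)
      \<and> (\<forall>x\<in>\<Inter>(snd (g B)). x \<in> B \<longleftrightarrow> x \<in> fst (g B))" if "B \<in> BB" for B
    using g0 that by (rule bspec)
  have gO: "kk_open r (fst (g B))" and gC: "ordLeq3 (card_of (snd (g B))) r"
    and gD: "\<forall>D\<in>snd (g B). kk_open r D \<and> kdense D" and gE: "\<forall>x\<in>\<Inter>(snd (g B)). x \<in> B \<longleftrightarrow> x \<in> fst (g B)"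
    if "B \<in> BB" for B using g[OF that] by auto
  define U where "U = (\<Union>B\<in>BB. fst (g B))"
  define F where "F = (\<Union>B\<in>BB. snd (g B))"
  have Uo: "kk_open r U" unfolding kk_open_def U_def
  proof
    fix x assume "x \<in> (\<Union>B\<in>BB. fst (g B))"
    then obtain B where B: "B \<in> BB" "x \<in> fst (g B)" by blast
    then obtain \<alpha> s where "x \<in> basic_nbhd r \<alpha> s" "basic_nbhd r \<alpha> s \<subseteq> fst (g B)"
      using gO[OF B(1)] B(2) unfolding kk_open_def by blast
    thus "\<exists>\<alpha> s. x \<in> basic_nbhd r \<alpha> s \<and> basic_nbhd r \<alpha> s \<subseteq> (\<Union>B\<in>BB. fst (g B))" using B(1) by blast
  qed
  have "ordLeq3 (card_of F) (card_of (UNIV::'k set))" unfolding F_def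
  proof (rule card_of_UNION_ordLeq_infinite[OF inf r_leq[OF assms(2)]], rule ballI)
    fix B assume "B \<in> BB"
    thus "ordLeq3 (card_of (snd (g B))) (card_of (UNIV::'k set))" by (rule r_leq[OF gC])
  qed
  hence Fc: "ordLeq3 (card_of F) r" by (rule leq_r)
  show ?thesis unfolding good_def
  proof (intro exI[of _ U] exI[of _ F] conjI)
    show "kk_open r U" by (rule Uo)
    show "ordLeq3 (card_of F) r" by (rule Fc)
    show "\<forall>D\<in>F. kk_open r D \<and> kdense D" unfolding F_def
    proof
      fix D assume "D \<in> (\<Union>B\<in>BB. snd (g B))"
      then obtain B where "B \<in> BB" "D \<in> snd (g B)" by blast
      thus "kk_open r D \<and> kdense D" using gD by blast
    qed
    show "\<forall>x\<in>\<Inter>F. x \<in> \<Union>BB \<longleftrightarrow> x \<in> U"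
    proof
      fix x assume x: "x \<in> \<Inter>F"
      have "\<forall>B\<in>BB. x \<in> B \<longleftrightarrow> x \<in> fst (g B)"
      proof
        fix B assume B: "B \<in> BB"
        have "x \<in> \<Inter>(snd (g B))" using x B unfolding F_def by blast
        thus "x \<in> B \<longleftrightarrow> x \<in> fst (g B)" using gE[OF B] by blast
      qed
      thus "x \<in> \<Union>BB \<longleftrightarrow> x \<in> U" unfolding U_def by blast
    qed
  qed
qed

lemma borel_good: "B \<in> kappa_borel r \<Longrightarrow> good B"
proof (induction rule: kappa_borel.induct)
  case (kb_open U) thus ?case by (rule good_open)
next
  case (kb_compl U) thus ?case using good_compl by blast
next
  case (kb_union F) thus ?case using good_Union by blast
qed

end



context kk begin

definition swc :: "'k \<Rightarrow> 'k \<Rightarrow> 'k \<Rightarrow> 'k" where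
  "swc a b v = (if b \<in> underS r a then v else if v = z0 then z1 else if v = z1 then z0 else v)"

lemma sw_swc: "sw a x b = swc a b (x b)" unfolding sw_def swc_def by (simp del: uS)

lemma swc_swc: "swc a b (swc a b v) = v" unfolding swc_def using z01 by (auto simp del: uS)

lemma sw_open: assumes "kk_open r D" shows "kk_open r (sw a -` D)"
  unfolding kk_open_def
proof
  fix x assume "x \<in> sw a -` D"
  then obtain \<alpha> p where ap: "sw a x \<in> basic_nbhd r \<alpha> p" "basic_nbhd r \<alpha> p \<subseteq> D"
    using assms unfolding kk_open_def by blast
  have "basic_nbhd r \<alpha> x \<subseteq> sw a -` D"
  proof
    fix z assume z: "z \<in> basic_nbhd r \<alpha> x"
    have "sw a z \<in> basic_nbhd r \<alpha> p"
      using z ap(1) unfolding basic_nbhd_def sw_swc by auto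
    thus "z \<in> sw a -` D" using ap(2) by blast
  qed
  moreover have "x \<in> basic_nbhd r \<alpha> x" by (rule in_nbhd)
  ultimately show "\<exists>\<alpha> s. x \<in> basic_nbhd r \<alpha> s \<and> basic_nbhd r \<alpha> s \<subseteq> sw a -` D" by blast
qed

lemma sw_dense: assumes "kdense D" shows "kdense (sw a -` D)"
  unfolding kdense_def
proof (intro allI)
  fix \<alpha> p
  obtain z where z: "z \<in> D" "z \<in> basic_nbhd r \<alpha> (sw a p)" using assms unfolding kdense_def by blast
  have "sw a (sw a z) = z" by (rule ext) (simp add: sw_swc swc_swc)
  hence "sw a z \<in> sw a -` D" using z(1) by simp
  moreover have "sw a z \<in> basic_nbhd r \<alpha> p"
    using z(2) unfolding basic_nbhd_def by (simp add: sw_swc swc_swc del: uS)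
  ultimately show "sw a -` D \<inter> basic_nbhd r \<alpha> p \<noteq> {}" by blast
qed

lemma univ_od: "kk_open r UNIV" "kdense UNIV"
  unfolding kk_open_def kdense_def using in_nbhd by blast+

lemma enum: assumes "ordLeq3 (card_of F) r" "\<forall>D\<in>F. kk_open r D \<and> kdense D"
  shows "\<exists>Dn :: 'k \<Rightarrow> ('k \<Rightarrow> 'k) set. (\<forall>j. kk_open r (Dn j) \<and> kdense (Dn j)) \<and> F \<subseteq> range Dn"
proof (cases "F = {}")
  case True thus ?thesis using univ_od by (intro exI[of _ "\<lambda>_. UNIV"]) auto
next
  case False
  obtain g :: "'k \<Rightarrow> ('k \<Rightarrow> 'k) set" where "g ` UNIV = F"
    using card_of_ordLeq2[OF False, of "UNIV :: 'k set"] r_leq[OF assms(1)] by blast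
  thus ?thesis using assms(2) by (intro exI[of _ g]) auto
qed

lemma not_borel: "range f \<notin> kappa_borel r"
proof
  assume "range f \<in> kappa_borel r"
  hence "good (range f)" by (rule borel_good)
  then obtain U F where UF: "kk_open r U" "ordLeq3 (card_of F) r" "\<forall>D\<in>F. kk_open r D \<and> kdense D"
    "\<forall>x\<in>\<Inter>F. x \<in> range f \<longleftrightarrow> x \<in> U" unfolding good_def by (elim exE conjE) blast
  show False
  proof (cases "U = {}")
    case True
    obtain Dn :: "'k \<Rightarrow> ('k \<Rightarrow> 'k) set" where Dn: "\<forall>j. kk_open r (Dn j) \<and> kdense (Dn j)" "F \<subseteq> range Dn" using enum[OF UF(2,3)] by (elim exE conjE) blast
    obtain y where y: "\<forall>j. f y \<in> Dn j" using construct[of Dn bt "\<lambda>_. bt", OF Dn(1)[rule_format]] by blast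
    have "f y \<in> \<Inter>F" using y Dn(2) by blast
    thus False using UF(4) True by blast
  next
    case False
    then obtain x0 where "x0 \<in> U" by blast
    then obtain a s where as: "x0 \<in> basic_nbhd r a s" "basic_nbhd r a s \<subseteq> U" using UF(1) unfolding kk_open_def by blast
    define F' where "F' = F \<union> (\<lambda>D. sw a -` D) ` F"
    have c: "ordLeq3 (card_of F') r" unfolding F'_def
      by (rule card_Un[OF UF(2) ordLeq_transitive[OF card_of_image UF(2)]])
    have od: "\<forall>D\<in>F'. kk_open r D \<and> kdense D" unfolding F'_def using UF(3) sw_open sw_dense by auto
    obtain Dn :: "'k \<Rightarrow> ('k \<Rightarrow> 'k) set" where Dn: "\<forall>j. kk_open r (Dn j) \<and> kdense (Dn j)" "F' \<subseteq> range Dn" using enum[OF c od] by (elim exE conjE) blast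
    obtain y where y: "f y \<in> basic_nbhd r a s" "\<forall>j. f y \<in> Dn j" using construct[of Dn a s, OF Dn(1)[rule_format]] by blast
    have yF: "f y \<in> \<Inter>F'" using y(2) Dn(2) by blast
    have "sw a (f y) \<in> basic_nbhd r a s" using y(1) unfolding basic_nbhd_def sw_def by (simp del: uS)
    hence sU: "sw a (f y) \<in> U" using as(2) by blast
    have "sw a (f y) \<in> \<Inter>F" using yF unfolding F'_def by blast
    hence "sw a (f y) \<in> range f" using UF(4) sU by blast
    then obtain y' where "sw a (f y) = f y'" by blast
    thus False using sw_f[of y' a y] by simp
  qed
qed

end




theorem corollary1p9:
  fixes r :: "'k rel"
  assumes "card_order r"
    and "\<not> countable (UNIV :: 'k set)"
    and "ordIso2 (card_of (\<Union>\<alpha>. Func (underS r \<alpha>) (UNIV :: 'k set))) r"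
  shows "\<exists>f :: ('k \<Rightarrow> 'k) \<Rightarrow> ('k \<Rightarrow> 'k).
           kk_continuous r f \<and> inj f \<and> range f \<notin> kappa_borel r"
proof -
  have "ordIso2 r (card_of (UNIV::'k set))" by (rule card_of_unique[OF assms(1)])
  hence "ordIso2 (card_of (\<Union>\<alpha>. Func (underS r \<alpha>) (UNIV :: 'k set))) (card_of (UNIV::'k set))"
    by (rule ordIso_transitive[OF assms(3)])
  from iffD2[OF card_of_ordIso this] obtain enc :: "('k \<Rightarrow> 'k) \<Rightarrow> 'k" where
    enc: "bij_betw enc (\<Union>\<alpha>. Func (underS r \<alpha>) (UNIV :: 'k set)) UNIV" by blast
  have "\<exists>z1::'k. z1 \<noteq> undefined"
  proof (rule ccontr)
    assume "\<not> ?thesis"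
    hence "(UNIV::'k set) = {undefined}" by auto
    thus False using assms(2) by (metis countable_finite finite.emptyI finite_insert)
  qed
  then obtain z1 :: 'k where z1: "z1 \<noteq> undefined" by blast
  interpret kk r enc undefined z1 z1
    by (unfold_locales) (use assms(1,2) enc z1 in auto)
  have "inj f" unfolding inj_def using f_inj by blast
  thus ?thesis using f_kk_cont not_borel by blast
qed


end
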